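(* (Schwarz lemma for biharmonic mappings) Let $H:\mathbb{D}\to\mathbb{D}$ be harmonic, $H=w_1+\overline{w_2}$ with $w_1,w_2$ analytic in $\mathbb{D}=\{|z|<1\}$. Suppose $u:\mathbb{D}\to\mathbb{D}$ is the biharmonic function $$u(z)=H(z)+\frac{1}{2}(1-|z|^{2})\big(zw_1'(z)+\overline{zw_2'(z)}\big)$$ and $u(0)=0$. Then for all $z\in\mathbb{D}$, $$|u(z)|\le \frac{4}{\pi}\arctan(|z|)+|z|,$$ and $$\Lambda_u(0)=|u_z(0)|+|u_{\overline z}(0)|\le \frac{6}{\pi}.$$ *)

theory Defs
  imports "HOL-Analysis.Analysis"
begin

definition wirtinger_z :: "(complex \<Rightarrow> complex) \<Rightarrow> complex \<Rightarrow> complex" where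
  "wirtinger_z u z = (frechet_derivative u (at z) 1 - \<i> * frechet_derivative u (at z) \<i>) / 2"

definition wirtinger_zbar :: "(complex \<Rightarrow> complex) \<Rightarrow> complex \<Rightarrow> complex" where
  "wirtinger_zbar u z = (frechet_derivative u (at z) 1 + \<i> * frechet_derivative u (at z) \<i>) / 2"

definition Lambda :: "(complex \<Rightarrow> complex) \<Rightarrow> complex \<Rightarrow> real" where
  "Lambda u z = norm (wirtinger_z u z) + norm (wirtinger_zbar u z)"

end

theory Submission imports Defs "HOL-Complex_Analysis.Complex_Analysis" begin


lemma moeb_deriv:
  assumes "norm c < 1" "norm w < 1"
  shows "((\<lambda>w. (w - c) / (1 - cnj c * w)) has_field_derivative (1 - cnj c * c) / (1 - cnj c * w)^2) (at w)"
proof -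
  have nz: "1 - cnj c * w \<noteq> 0"
  proof
    assume "1 - cnj c * w = 0"
    then have "norm (cnj c * w) = 1" by (metis norm_one right_minus_eq)
    moreover have "norm (cnj c * w) < 1" using assms by (simp add: norm_mult) (metis mult_strict_mono' norm_ge_zero mult_1)
    ultimately show False by simp
  qed
  show ?thesis
    apply (rule derivative_eq_intros refl | simp add: nz)+
    using nz by (simp add: divide_simps power2_eq_square) (simp add: algebra_simps power2_eq_square)
qed

lemma schwarz_pick:
  assumes holf: "f holomorphic_on ball 0 1" and fin: "\<And>z. norm z < 1 \<Longrightarrow> norm (f z) < 1"
    and a: "norm a < 1"
  shows "norm (deriv f a) * (1 - (norm a)^2) \<le> 1 - (norm (f a))^2"
proof -
  define b where "b = f a"
  have b: "norm b < 1" using fin a b_def by simp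
  define \<phi> where "\<phi> = Moebius_function 0 (-a)"
  define \<psi> where "\<psi> = Moebius_function 0 b"
  define G where "G = \<psi> \<circ> f \<circ> \<phi>"
  have phi_eq: "\<phi> w = (w - (-a)) / (1 - cnj (-a) * w)" for w
    by (simp add: \<phi>_def Moebius_function_simple)
  have psi_eq: "\<psi> w = (w - b) / (1 - cnj b * w)" for w
    by (simp add: \<psi>_def Moebius_function_simple)
  have phi_in: "norm (\<phi> w) < 1" if "norm w < 1" for w
    using Moebius_function_norm_lt_1[of "-a" w 0] a that by (simp add: \<phi>_def)
  have psi_in: "norm (\<psi> w) < 1" if "norm w < 1" for w
    using Moebius_function_norm_lt_1[of b w 0] b that by (simp add: \<psi>_def)
  have holphi: "\<phi> holomorphic_on ball 0 1" unfolding \<phi>_def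
    by (rule Moebius_function_holomorphic) (use a in simp)
  have holpsi: "\<psi> holomorphic_on ball 0 1" unfolding \<psi>_def
    by (rule Moebius_function_holomorphic) (use b in simp)
  have holG: "G holomorphic_on ball 0 1" unfolding G_def
    apply (rule holomorphic_on_compose_gen[OF holphi holomorphic_on_compose_gen[OF holf holpsi]])
    using phi_in fin by auto
  have phi0: "\<phi> 0 = a" by (simp add: phi_eq)
  have G0: "G 0 = 0" by (simp add: G_def phi0 psi_eq b_def)
  have Gin: "norm (G z) < 1" if "norm z < 1" for z
    using that by (simp add: G_def phi_in fin psi_in)
  have "norm (deriv G 0) \<le> 1"
    using Schwarz_Lemma(2)[OF holG G0 Gin, of 0] by simp
  have dphi: "(\<phi> has_field_derivative (1 - cnj a * a)) (at 0)"
    using moeb_deriv[of "-a" 0] a unfolding phi_eq[abs_def] by simp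
  have df: "(f has_field_derivative deriv f a) (at a)"
    using holf a by (simp add: holomorphic_derivI)
  have cb: "cnj b * b = of_real ((norm b)^2)" by (subst complex_norm_square) (rule mult.commute)
  have ca: "cnj a * a = of_real ((norm a)^2)" by (subst complex_norm_square) (rule mult.commute)
  have nb: "(norm b)^2 < 1" using b by (simp add: abs_square_less_1)
  have nb1: "complex_of_real (cmod b) * complex_of_real (cmod b) \<noteq> 1"
    by (metis nb of_real_mult of_real_eq_1_iff power2_eq_square less_irrefl)
  have dpsi: "(\<psi> has_field_derivative (1 / of_real (1 - (norm b)^2))) (at b)"
    using moeb_deriv[of b b] b nb nb1 unfolding psi_eq[abs_def] cb
    by (simp add: power2_eq_square)
  have dpf: "((\<psi> \<circ> f) has_field_derivative (1 / of_real (1 - (norm b)^2)) * deriv f a) (at a)"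
    using DERIV_chain[OF dpsi[unfolded b_def] df] unfolding b_def .
  have dG: "(G has_field_derivative (1 / of_real (1 - (norm b)^2)) * deriv f a * of_real (1 - (norm a)^2)) (at 0)"
    unfolding G_def using DERIV_chain[OF dpf[folded phi0] dphi] by (simp add: phi0 ca)
  have "norm ((1 / of_real (1 - (norm b)^2)) * deriv f a * of_real (1 - (norm a)^2)) \<le> 1"
    using \<open>norm (deriv G 0) \<le> 1\<close> DERIV_imp_deriv[OF dG] by simp
  moreover have "0 < 1 - (norm b)^2" "0 \<le> 1 - (norm a)^2" using nb a by (auto simp: abs_square_le_1)
  ultimately show ?thesis
    by (simp add: norm_mult norm_divide b_def field_simps del: of_real_power of_real_diff)
qed


lemma key_ineq:
  fixes w :: complex
  assumes w: "\<bar>Re w\<bar> < 1"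
  shows "pi/4 * \<bar>Re w\<bar> \<le> arctan (norm ((exp(\<i> * of_real(pi/2) * w) - 1)/(exp(\<i> * of_real(pi/2)*w) + 1)))"
proof -
  define E where "E = exp(\<i> * of_real(pi/2) * w)"
  define \<rho> where "\<rho> = exp(-(pi/2) * Im w)"
  define \<alpha> where "\<alpha> = pi/2 * Re w"
  define t where "t = pi/4 * \<bar>Re w\<bar>"
  define c where "c = cos \<alpha>"
  have ReE: "Re E = \<rho> * c" by (simp add: E_def \<rho>_def c_def \<alpha>_def Re_exp)
  have ImE: "Im E = \<rho> * sin \<alpha>" by (simp add: E_def \<rho>_def \<alpha>_def Im_exp)
  have rho: "\<rho> > 0" by (simp add: \<rho>_def)
  have t2: "2 * t = \<bar>\<alpha>\<bar>" by (simp add: t_def \<alpha>_def abs_mult)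
  have t0: "0 \<le> t" "t < pi/4" using w by (auto simp: t_def)
  have c2: "c = cos (2*t)" by (simp add: c_def t2)
  have cpos: "c > 0" unfolding c2 by (rule cos_gt_zero_pi) (use t0 in auto)
  have sc: "(sin \<alpha>)^2 = 1 - c^2" by (simp add: c_def sin_squared_eq)
  have s2t: "(sin (2*t))^2 = 1 - c^2" by (simp add: c2 sin_squared_eq)
  have N1: "(norm (E - 1))^2 = \<rho>^2 - 2*\<rho>*c + 1"
    by (simp add: cmod_power2 ReE ImE power_mult_distrib sc power2_diff algebra_simps)
  have N2: "(norm (E + 1))^2 = \<rho>^2 + 2*\<rho>*c + 1"
    by (simp add: cmod_power2 ReE ImE power_mult_distrib sc power2_sum algebra_simps)
  have pos2: "\<rho>^2 + 2*\<rho>*c + 1 > 0" using rho cpos by (simp add: add_pos_nonneg)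
  have F2: "(norm ((E - 1)/(E + 1)))^2 = (\<rho>^2 - 2*\<rho>*c + 1) / (\<rho>^2 + 2*\<rho>*c + 1)"
    by (simp add: norm_divide power_divide N1 N2)
  have tan2: "(tan t)^2 = (1 - c) / (1 + c)"
  proof -
    have "(tan t)^2 = (sin (2*t))^2 / (c + 1)^2" by (simp add: tan_half c2 power_divide)
    also have "\<dots> = (1 - c) * (1 + c) / ((1 + c) * (1 + c))" by (simp only: s2t) (simp add: power2_eq_square algebra_simps)
    also have "\<dots> = (1 - c) / (1 + c)" using cpos by simp
    finally show ?thesis .
  qed
  have "(1 - c) / (1 + c) \<le> (\<rho>^2 - 2*\<rho>*c + 1) / (\<rho>^2 + 2*\<rho>*c + 1)"
  proof -
    have "(1 - c) * (\<rho>^2 + 2*\<rho>*c + 1) \<le> (\<rho>^2 - 2*\<rho>*c + 1) * (1 + c)"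
    proof -
      have "0 \<le> 2*c*(\<rho> - 1)^2" using cpos by simp
      then show ?thesis by (simp add: power2_eq_square algebra_simps)
    qed
    then show ?thesis using cpos pos2 by (simp add: divide_simps)
  qed
  then have "(tan t)^2 \<le> (norm ((E - 1)/(E + 1)))^2" by (simp add: tan2 F2)
  moreover have "tan t \<ge> 0" using t0 tan_gt_zero[of t] pi_gt_zero by (cases "t = 0") (simp, linarith)
  ultimately have "tan t \<le> norm ((E - 1)/(E + 1))"
    by (meson norm_ge_zero power2_le_imp_le)
  then have "arctan (tan t) \<le> arctan (norm ((E - 1)/(E + 1)))" by (simp add: arctan_le_iff)
  moreover have "arctan (tan t) = t" using t0 pi_gt_zero by (intro arctan_tan) linarith+
  ultimately have "t \<le> arctan (norm ((E - 1)/(E + 1)))" by simp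
  then show ?thesis unfolding t_def E_def .
qed


definition expg :: "(complex \<Rightarrow> complex) \<Rightarrow> complex \<Rightarrow> complex" where
  "expg g z = exp(\<i> * of_real(pi/2) * g z)"

definition cay :: "(complex \<Rightarrow> complex) \<Rightarrow> complex \<Rightarrow> complex" where
  "cay g z = (expg g z - 1) / (expg g z + 1)"

lemma expg_re_pos:
  assumes "\<bar>Re (g z)\<bar> < 1"
  shows "Re (expg g z) > 0"
proof -
  have "Re (expg g z) = exp (-(pi/2) * Im (g z)) * cos (pi/2 * Re (g z))"
    by (simp add: expg_def Re_exp)
  moreover have "cos (pi/2 * Re (g z)) > 0"
  proof -
    have "\<bar>pi/2 * Re (g z)\<bar> < pi/2" using assms pi_gt_zero by (simp add: abs_mult)
    then show ?thesis by (intro cos_gt_zero_pi) (auto simp: abs_less_iff)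
  qed
  ultimately show ?thesis by simp
qed

lemma expg_ne:
  assumes "\<bar>Re (g z)\<bar> < 1"
  shows "expg g z + 1 \<noteq> 0"
proof
  assume "expg g z + 1 = 0"
  then have "Re (expg g z + 1) = 0" by simp
  with expg_re_pos[of g z, OF assms] show False by simp
qed

lemma cay_lt1:
  assumes "\<bar>Re (g z)\<bar> < 1"
  shows "norm (cay g z) < 1"
proof -
  have p: "Re (expg g z) > 0" by (rule expg_re_pos[of g z, OF assms])
  have a1: "(norm (expg g z - 1))^2 = (Re (expg g z) - 1)^2 + (Im (expg g z))^2"
    by (simp add: cmod_power2)
  have a2: "(norm (expg g z + 1))^2 = (Re (expg g z) + 1)^2 + (Im (expg g z))^2"
    by (simp add: cmod_power2)
  have "(norm (expg g z - 1))^2 < (norm (expg g z + 1))^2"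
    unfolding a1 a2 using p by (simp add: power2_eq_square algebra_simps)
  then have "norm (expg g z - 1) < norm (expg g z + 1)"
    by (meson norm_ge_zero power_less_imp_less_base)
  then show ?thesis using expg_ne[of g z, OF assms] by (simp add: cay_def norm_divide divide_simps)
qed

lemma cay_hol:
  assumes holg: "g holomorphic_on ball 0 1" and re: "\<And>z. norm z < 1 \<Longrightarrow> \<bar>Re (g z)\<bar> < 1"
  shows "cay g holomorphic_on ball 0 1"
proof -
  have "(\<lambda>z. (exp(\<i> * of_real(pi/2) * g z) - 1) / (exp(\<i> * of_real(pi/2) * g z) + 1)) holomorphic_on ball 0 1"
    using expg_ne re unfolding expg_def by (intro holomorphic_intros holg) auto
  then show ?thesis by (simp add: cay_def[abs_def] expg_def)
qed

lemma cay_deriv: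
  assumes holg: "g holomorphic_on ball 0 1" and re: "\<And>z. norm z < 1 \<Longrightarrow> \<bar>Re (g z)\<bar> < 1"
    and z: "norm z < 1"
  shows "(cay g has_field_derivative (\<i> * of_real (pi/4) * deriv g z * (1 - (cay g z)^2))) (at z)"
proof -
  have dg: "(g has_field_derivative deriv g z) (at z)"
    using holg z by (intro holomorphic_derivI[of _ "ball 0 1"]) auto
  define E where "E = expg g z"
  have ne: "E + 1 \<noteq> 0" using expg_ne re z by (simp add: E_def)
  have ne2: "2 + E * 2 \<noteq> 0"
  proof
    assume "2 + E * 2 = 0"
    then have "2 * (E + 1) = 0" by (simp add: algebra_simps)
    with ne show False by (metis mult_eq_0_iff zero_neq_numeral)
  qed
  have d1: "((\<lambda>z. \<i> * of_real(pi/2) * g z) has_field_derivative \<i> * of_real(pi/2) * deriv g z) (at z)"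
    by (rule DERIV_cmult[OF dg])
  have dE: "((\<lambda>z. exp(\<i> * of_real(pi/2) * g z)) has_field_derivative E * (\<i> * of_real(pi/2) * deriv g z)) (at z)"
    using DERIV_chain'[OF d1 DERIV_exp] by (simp add: E_def expg_def)
  have dEm: "((\<lambda>z. exp(\<i> * of_real(pi/2) * g z) - 1) has_field_derivative E * (\<i> * of_real(pi/2) * deriv g z)) (at z)"
    using DERIV_diff[OF dE DERIV_const[of 1]] by simp
  have dEp: "((\<lambda>z. exp(\<i> * of_real(pi/2) * g z) + 1) has_field_derivative E * (\<i> * of_real(pi/2) * deriv g z)) (at z)"
    using DERIV_add[OF dE DERIV_const[of 1]] by simp
  have "((\<lambda>z. (exp(\<i> * of_real(pi/2) * g z) - 1) / (exp(\<i> * of_real(pi/2) * g z) + 1)) has_field_derivative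
      ((E * (\<i> * of_real(pi/2) * deriv g z)) * (E + 1) - (E - 1) * (E * (\<i> * of_real(pi/2) * deriv g z))) / ((E + 1) * (E + 1))) (at z)"
    using DERIV_divide[OF dEm dEp] ne by (simp add: E_def expg_def)
  moreover have "((E * (\<i> * of_real(pi/2) * deriv g z)) * (E + 1) - (E - 1) * (E * (\<i> * of_real(pi/2) * deriv g z))) / ((E + 1) * (E + 1))
      = \<i> * of_real (pi/4) * deriv g z * (1 - ((E - 1)/(E + 1))^2)"
    using ne ne2 by (simp add: divide_simps power2_eq_square) (simp add: algebra_simps)
  ultimately have "((\<lambda>z. (exp(\<i> * of_real(pi/2) * g z) - 1) / (exp(\<i> * of_real(pi/2) * g z) + 1)) has_field_derivative
      \<i> * of_real (pi/4) * deriv g z * (1 - ((E - 1)/(E + 1))^2)) (at z)"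
    by (simp only:)
  moreover have "cay g = (\<lambda>z. (exp(\<i> * of_real(pi/2) * g z) - 1) / (exp(\<i> * of_real(pi/2) * g z) + 1))"
    by (simp add: fun_eq_iff cay_def expg_def)
  moreover have "cay g z = (E - 1)/(E + 1)" by (simp add: cay_def E_def)
  ultimately show ?thesis by (simp only:)
qed



lemma strip_val:
  assumes holg: "g holomorphic_on ball 0 1" and re: "\<And>z. norm z < 1 \<Longrightarrow> \<bar>Re (g z)\<bar> < 1"
    and g0: "g 0 = 0" and z: "norm z < 1"
  shows "\<bar>Re (g z)\<bar> \<le> 4/pi * arctan (norm z)"
proof -
  have cl: "\<And>z. norm z < 1 \<Longrightarrow> norm (cay g z) < 1" using cay_lt1 re by blast
  have c0: "cay g 0 = 0" by (simp add: cay_def expg_def g0)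
  have "norm (cay g z) \<le> norm z"
    by (rule Schwarz_Lemma(1)[OF cay_hol[OF holg re] c0 cl z])
  have "pi/4 * \<bar>Re (g z)\<bar> \<le> arctan (norm (cay g z))"
    using key_ineq[OF re[OF z]] by (simp add: cay_def expg_def)
  also have "\<dots> \<le> arctan (norm z)" using \<open>norm (cay g z) \<le> norm z\<close> by (rule arctan_monotone')
  finally have "pi/4 * \<bar>Re (g z)\<bar> \<le> arctan (norm z)" .
  then show ?thesis using pi_gt_zero by (simp add: field_simps)
qed

lemma strip_der:
  assumes holg: "g holomorphic_on ball 0 1" and re: "\<And>z. norm z < 1 \<Longrightarrow> \<bar>Re (g z)\<bar> < 1"
    and z: "norm z < 1"
  shows "norm (deriv g z) * (1 - (norm z)^2) \<le> 4/pi"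
proof -
  define F where "F = cay g"
  have cl: "\<And>z. norm z < 1 \<Longrightarrow> norm (cay g z) < 1" using cay_lt1 re by blast
  have dF: "deriv F z = \<i> * of_real (pi/4) * deriv g z * (1 - (F z)^2)"
    unfolding F_def by (rule DERIV_imp_deriv[OF cay_deriv[OF holg re z]])
  have sp: "norm (deriv F z) * (1 - (norm z)^2) \<le> 1 - (norm (F z))^2"
    unfolding F_def by (rule schwarz_pick[OF cay_hol[OF holg re] cl z])
  have nF: "norm (F z) < 1" unfolding F_def by (rule cl[OF z])
  define N where "N = norm (1 - (F z)^2)"
  have q: "1 - (norm (F z))^2 \<le> N"
    using norm_triangle_ineq2[of 1 "(F z)^2"] by (simp add: N_def norm_power)
  have qpos: "0 < 1 - (norm (F z))^2" using nF by (simp add: abs_square_less_1)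
  have Npos: "0 < N" using q qpos by linarith
  have nd: "norm (deriv F z) = pi/4 * norm (deriv g z) * N"
    by (simp add: dF N_def norm_mult)
  have zz: "0 \<le> 1 - (norm z)^2" using z by (simp add: abs_square_le_1)
  have "(pi/4 * (norm (deriv g z) * (1 - (norm z)^2))) * N \<le> 1 * N"
  proof -
    have "(pi/4 * (norm (deriv g z) * (1 - (norm z)^2))) * N = norm (deriv F z) * (1 - (norm z)^2)"
      unfolding nd by (simp only: ac_simps)
    then show ?thesis using sp q by linarith
  qed
  then have "pi/4 * (norm (deriv g z) * (1 - (norm z)^2)) \<le> 1"
    using Npos by (simp add: mult_le_cancel_right)
  then show ?thesis using pi_gt_zero by (simp add: field_simps)
qed

lemma rot_props:
  assumes w1_hol: "w1 holomorphic_on ball 0 1" and w2_hol: "w2 holomorphic_on ball 0 1"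
    and H_maps: "\<forall>z\<in>ball 0 1. norm (w1 z + cnj (w2 z)) < 1"
    and H0: "w1 0 + cnj (w2 0) = 0"
    and e: "norm e = 1"
  defines "g \<equiv> \<lambda>z. cnj e * w1 z + e * w2 z - (cnj e * w1 0 + e * w2 0)"
  shows "g holomorphic_on ball 0 1" "\<And>z. norm z < 1 \<Longrightarrow> \<bar>Re (g z)\<bar> < 1" "g 0 = 0"
    "\<And>z. Re (g z) = Re (cnj e * (w1 z + cnj (w2 z)))"
    "\<And>z. norm z < 1 \<Longrightarrow> deriv g z = cnj e * deriv w1 z + e * deriv w2 z"
proof -
  show hol: "g holomorphic_on ball 0 1" unfolding g_def
    by (intro holomorphic_intros w1_hol w2_hol)
  show re: "Re (g z) = Re (cnj e * (w1 z + cnj (w2 z)))" for z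
  proof -
    have reid: "Re (cnj e * x + e * y) = Re (cnj e * (x + cnj y))" for x y
      by (simp add: algebra_simps)
    have "Re (cnj e * w1 0 + e * w2 0) = 0" unfolding reid using H0 by simp
    then show ?thesis by (simp add: g_def algebra_simps)
  qed
  show "\<bar>Re (g z)\<bar> < 1" if "norm z < 1" for z
  proof -
    have "\<bar>Re (g z)\<bar> \<le> norm (cnj e * (w1 z + cnj (w2 z)))" unfolding re by (rule abs_Re_le_cmod)
    also have "\<dots> = norm (w1 z + cnj (w2 z))" using e by (simp add: norm_mult)
    also have "\<dots> < 1" using H_maps that by auto
    finally show ?thesis .
  qed
  show "g 0 = 0" by (simp add: g_def)
  show "deriv g z = cnj e * deriv w1 z + e * deriv w2 z" if "norm z < 1" for z
  proof -
    have d1: "(w1 has_field_derivative deriv w1 z) (at z)"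
      using w1_hol that by (intro holomorphic_derivI[of _ "ball 0 1"]) auto
    have d2: "(w2 has_field_derivative deriv w2 z) (at z)"
      using w2_hol that by (intro holomorphic_derivI[of _ "ball 0 1"]) auto
    have "(g has_field_derivative cnj e * deriv w1 z + e * deriv w2 z - 0) (at z)"
      unfolding g_def by (intro DERIV_diff DERIV_add DERIV_cmult d1 d2 DERIV_const)
    then show ?thesis by (simp add: DERIV_imp_deriv)
  qed
qed

lemma U_deriv:
  assumes w1_hol: "w1 holomorphic_on ball 0 1" and w2_hol: "w2 holomorphic_on ball 0 1"
  shows "((\<lambda>z. w1 z + cnj (w2 z) + (1 - z * cnj z) * (z * deriv w1 z + cnj (z * deriv w2 z)) / 2)
     has_derivative (\<lambda>h. 3/2 * deriv w1 0 * h + cnj (3/2 * deriv w2 0 * h))) (at 0)"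
proof -
  have hd: "(f has_derivative (\<lambda>h. deriv f 0 * h)) (at 0)" if "f holomorphic_on ball 0 1" for f
    using holomorphic_derivI[OF that open_ball, of 0] by (simp add: has_field_derivative_def)
  have d1: "(w1 has_derivative (\<lambda>h. deriv w1 0 * h)) (at 0)" by (rule hd[OF w1_hol])
  have d2: "(w2 has_derivative (\<lambda>h. deriv w2 0 * h)) (at 0)" by (rule hd[OF w2_hol])
  have dd1: "(deriv w1 has_derivative (\<lambda>h. deriv (deriv w1) 0 * h)) (at 0)"
    by (rule hd) (intro holomorphic_deriv w1_hol open_ball)
  have dd2: "(deriv w2 has_derivative (\<lambda>h. deriv (deriv w2) 0 * h)) (at 0)"
    by (rule hd) (intro holomorphic_deriv w2_hol open_ball)
  show ?thesis
    by (auto intro!: derivative_eq_intros d1 d2 dd1 dd2 simp: fun_eq_iff algebra_simps field_simps)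
qed

lemma unit_of:
  assumes "x \<noteq> 0"
  shows "norm (x / of_real (norm x)) = 1" "cnj (x / of_real (norm x)) * x = of_real (norm x)"
proof -
  show "norm (x / of_real (norm x)) = 1" using assms by (simp add: norm_divide)
  have "cnj (x / of_real (norm x)) * x = (x * cnj x) / of_real (norm x)" by (simp add: ac_simps)
  also have "\<dots> = of_real ((norm x)^2) / of_real (norm x)" by (simp only: complex_norm_square)
  also have "\<dots> = of_real (norm x)" using assms by (simp add: power2_eq_square)
  finally show "cnj (x / of_real (norm x)) * x = of_real (norm x)" .
qed

theorem theorem3:
  fixes w1 w2 u :: "complex \<Rightarrow> complex"
  assumes w1_hol: "w1 holomorphic_on ball 0 1"
      and w2_hol: "w2 holomorphic_on ball 0 1"
      and H_maps: "\<forall>z\<in>ball 0 1. norm (w1 z + cnj (w2 z)) < 1"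
      and u_eq: "\<forall>z\<in>ball 0 1. u z = w1 z + cnj (w2 z)
                   + complex_of_real ((1 - (norm z)\<^sup>2) / 2)
                     * (z * deriv w1 z + cnj (z * deriv w2 z))"
      and u_maps: "\<forall>z\<in>ball 0 1. norm (u z) < 1"
      and u0: "u 0 = 0"
  shows "(\<forall>z\<in>ball 0 1. norm (u z) \<le> 4 / pi * arctan (norm z) + norm z)
         \<and> Lambda u 0 \<le> 6 / pi"
proof -
  have H0: "w1 0 + cnj (w2 0) = 0" using u_eq u0 by auto
  note rp = rot_props[OF w1_hol w2_hol H_maps H0]
  define gg where "gg = (\<lambda>e z. cnj e * w1 z + e * w2 z - (cnj e * w1 0 + e * w2 0))"
  have gprops: "gg e holomorphic_on ball 0 1" "\<And>z. norm z < 1 \<Longrightarrow> \<bar>Re (gg e z)\<bar> < 1" "gg e 0 = 0"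
    "\<And>z. Re (gg e z) = Re (cnj e * (w1 z + cnj (w2 z)))"
    "\<And>z. norm z < 1 \<Longrightarrow> deriv (gg e) z = cnj e * deriv w1 z + e * deriv w2 z"
    if "norm e = 1" for e
    using rp[OF that] unfolding gg_def by auto
  have partA: "norm (u z) \<le> 4 / pi * arctan (norm z) + norm z" if z: "norm z < 1" for z
  proof -
    define Hz where "Hz = w1 z + cnj (w2 z)"
    define K where "K = z * deriv w1 z + cnj (z * deriv w2 z)"
    have hb: "norm Hz \<le> 4 / pi * arctan (norm z)"
    proof (cases "Hz = 0")
      case True then show ?thesis using pi_gt_zero by simp
    next
      case False
      define e where "e = Hz / of_real (norm Hz)"
      have e1: "norm e = 1" and ce: "cnj e * Hz = of_real (norm Hz)"
        using unit_of[OF False] by (auto simp: e_def)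
      have "Re (gg e z) = Re (cnj e * Hz)" using gprops(4)[OF e1, of z] by (simp only: Hz_def)
      also have "\<dots> = norm Hz" by (simp only: ce Re_complex_of_real)
      finally have "Re (gg e z) = norm Hz" .
      moreover have "\<bar>Re (gg e z)\<bar> \<le> 4/pi * arctan (norm z)"
        by (rule strip_val[OF gprops(1,2,3)[OF e1] z])
      ultimately show ?thesis by simp
    qed
    have zz: "0 \<le> 1 - (norm z)^2" using z by (simp add: abs_square_le_1)
    have kb: "norm K * (1 - (norm z)^2) \<le> 4/pi * norm z"
    proof (cases "K = 0")
      case True then show ?thesis using pi_gt_zero by simp
    next
      case False
      define e where "e = K / of_real (norm K)"
      have e1: "norm e = 1" and ce: "cnj e * K = of_real (norm K)"
        using unit_of[OF False] by (auto simp: e_def)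
      have "Re (z * deriv (gg e) z) = Re (cnj e * K)"
        using gprops(5)[OF e1 z] by (simp add: K_def algebra_simps)
      then have "norm K = Re (z * deriv (gg e) z)" using ce by simp
      also have "\<dots> \<le> norm z * norm (deriv (gg e) z)"
        by (metis complex_Re_le_cmod norm_mult)
      finally have nk: "norm K \<le> norm z * norm (deriv (gg e) z)" .
      have "norm K * (1 - (norm z)^2) \<le> norm z * (norm (deriv (gg e) z) * (1 - (norm z)^2))"
        using mult_right_mono[OF nk zz] by (simp only: mult.assoc)
      also have "\<dots> \<le> norm z * (4/pi)"
        by (rule mult_left_mono[OF strip_der[OF gprops(1,2)[OF e1] z] norm_ge_zero])
      finally show ?thesis by (simp add: mult.commute)
    qed
    have ueq: "u z = Hz + of_real ((1 - (norm z)^2) / 2) * K"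
      using u_eq z by (simp add: Hz_def K_def)
    have "norm (u z) \<le> norm Hz + norm (of_real ((1 - (norm z)^2) / 2) * K)"
      unfolding ueq by (rule norm_triangle_ineq)
    also have "norm (of_real ((1 - (norm z)^2) / 2) * K) = norm K * (1 - (norm z)^2) / 2"
      using zz by (simp add: norm_mult abs_of_nonneg del: of_real_diff of_real_power of_real_divide)
    also have "\<dots> \<le> 2/pi * norm z" using kb by simp
    also have "\<dots> \<le> norm z"
    proof -
      have "2/pi \<le> 1" using pi_gt3 by simp
      then show ?thesis using mult_right_mono[OF \<open>2/pi \<le> 1\<close> norm_ge_zero[of z]] by simp
    qed
    finally show ?thesis using hb by linarith
  qed
  define a where "a = deriv w1 0"
  define b where "b = deriv w2 0"
  define L where "L = (\<lambda>h. 3/2 * a * h + cnj (3/2 * b * h))"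
  have dU: "((\<lambda>z. w1 z + cnj (w2 z) + (1 - z * cnj z) * (z * deriv w1 z + cnj (z * deriv w2 z)) / 2)
     has_derivative L) (at 0)"
    using U_deriv[OF w1_hol w2_hol] by (simp add: L_def a_def b_def)
  have du: "(u has_derivative L) (at 0)"
  proof (rule has_derivative_transform_within_open[OF dU open_ball])
    show "0 \<in> ball (0::complex) 1" by simp
    fix z :: complex assume "z \<in> ball 0 1"
    moreover have "complex_of_real ((1 - (norm z)^2) / 2) = (1 - z * cnj z) / 2"
      by (subst complex_norm_square[symmetric]) simp
    ultimately show "w1 z + cnj (w2 z) + (1 - z * cnj z) * (z * deriv w1 z + cnj (z * deriv w2 z)) / 2 = u z"
      using u_eq by auto
  qed
  have fd: "frechet_derivative u (at 0) = L" using frechet_derivative_at[OF du] by simp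
  have Lam: "Lambda u 0 = 3/2 * (norm a + norm b)"
    unfolding Lambda_def wirtinger_z_def wirtinger_zbar_def fd L_def
    by (simp add: norm_mult algebra_simps)
  have ab: "norm a + norm b \<le> 4/pi"
  proof -
    define \<alpha> where "\<alpha> = (if a = 0 then 1 else a / of_real (norm a))"
    define \<beta> where "\<beta> = (if b = 0 then 1 else b / of_real (norm b))"
    have na: "norm \<alpha> = 1" "a = of_real (norm a) * \<alpha>"
      by (auto simp: \<alpha>_def norm_divide)
    have nb: "norm \<beta> = 1" "b = of_real (norm b) * \<beta>"
      by (auto simp: \<beta>_def norm_divide)
    define e where "e = csqrt (\<alpha> * cnj \<beta>)"
    have e1: "norm e = 1" using na nb by (simp add: e_def norm_mult)
    have bb: "\<beta> * cnj \<beta> = 1"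
      using nb(1) complex_norm_square[of \<beta>] by simp
    have e2: "e * e = \<alpha> * cnj \<beta>" using power2_csqrt[of "\<alpha> * cnj \<beta>"] by (simp add: e_def power2_eq_square)
    have ee: "cnj e * e = 1"
      using e1 complex_norm_square[of e] by (simp add: mult.commute)
    have key: "cnj e * \<alpha> = e * \<beta>"
    proof -
      have "cnj e * \<alpha> = cnj e * (\<alpha> * (\<beta> * cnj \<beta>))" using bb by simp
      also have "\<dots> = cnj e * (e * e) * \<beta>" using e2 by (simp add: ac_simps)
      also have "\<dots> = (cnj e * e) * e * \<beta>" by (simp add: ac_simps)
      also have "\<dots> = e * \<beta>" using ee by simp
      finally show ?thesis .
    qed
    have "deriv (gg e) 0 = cnj e * a + e * b" using gprops(5)[OF e1, of 0] by (simp add: a_def b_def)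
    also have "\<dots> = of_real (norm a + norm b) * (e * \<beta>)"
    proof -
      have "cnj e * a = of_real (norm a) * (cnj e * \<alpha>)" using na(2) by (metis mult.left_commute)
      then have ca: "cnj e * a = of_real (norm a) * (e * \<beta>)" unfolding key .
      have cb: "e * b = of_real (norm b) * (e * \<beta>)" using nb(2) by (metis mult.left_commute)
      show ?thesis unfolding ca cb by (simp add: distrib_right)
    qed
    finally have "norm (deriv (gg e) 0) = norm a + norm b"
      using e1 nb(1) by (simp add: norm_mult del: of_real_add)
    moreover have "norm (deriv (gg e) 0) * (1 - (norm (0::complex))^2) \<le> 4/pi"
      using strip_der[OF gprops(1,2)[OF e1], of 0] by simp
    ultimately show ?thesis by simp
  qed
  have "Lambda u 0 \<le> 6/pi" unfolding Lam using ab by (simp add: field_simps)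
  with partA show ?thesis by auto
qed

end
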